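(* In the theory $\mathfrak{T}$, the following holds for every formula $\Phi(\alpha)$ (possibly with parameters): $$\forall X\,\exists Y\,\forall\alpha\,\big(\alpha\in Y \iff \alpha\in X\wedge\Phi(\alpha)\big).$$
   Context: The theory $\mathfrak{T}$ is set up as follows. The universe consists of "things", each of which is either a set or a function on a set. Variables $\alpha,\beta,\gamma,\eta,\xi,\zeta,\dots$ range over all things and $X,Y,Z,\dots$ range over sets. For a set $X$, the symbols $f_X,g_X,F_X,\dots$ range over functions on $X$. The primitive predicates are $\alpha\in\beta$, $\alpha=\beta$, the ternary predicate $f:Y\twoheadrightarrow Z$ (read "$f$ has domain $Y$ and codomain $Z$") and the ternary predicate $f:\alpha\mapsto\beta$ (read "$f$ maps $\alpha$ to $\beta$"). Notation: $\alpha^+$ is the singleton $\{\alpha\}$ and $\langle\alpha,\beta\rangle:=\{\alpha,\{\alpha,\beta\}\}$. An ur-function is a function on a singleton $\alpha^+$. For a function $f$ and an argument $\alpha$ with a unique $\beta$ such that $f:\alpha\mapsto\beta$, this $\beta$ is written $f(\alpha)$. Axioms of $\mathfrak{T}$: - Extensionality for sets. - No function on a set is a set. - A set has no domain or codomain and maps nothing to anything. - There is an empty set $\emptyset$. - Pairing: for all $\alpha,\beta$ the set $\{\alpha,\beta\}$ exists. - Union (sum set). - Power set. - Infinity: $\omega$ is the set of finite Zermelo ordinals, where $0=\emptyset$ and $n+1=n^+$. - Regularity. - A function on a set has no elements. - (GEN-F) For nonempty $X$, every $f_X$ satisfies $f_X:Y\twoheadrightarrow Z$ for some sets $Y,Z$,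 and for each $\alpha\in Y$ there is a unique $\beta$ with $f_X:\alpha\mapsto\beta$. - $f_X$ has no domain other than $X$. - $f_X:\alpha\mapsto\beta$ implies $\alpha\in X$. - For nonempty $X$, if $f_X:X\twoheadrightarrow\beta$ then $\beta$ is the image set $f_X[X]=\{\gamma:\exists\eta\in X\,(f_X:\eta\mapsto\gamma)\}$. - (INV) For nonempty $X$ with $f_X:X\twoheadrightarrow Y$, for every $\beta$ the set $\{\alpha\in X: f_X:\alpha\mapsto\beta\}$ exists. - (EXT-F) $f_X=g_Y$ iff $X=Y$ and, for all $\alpha,\beta$, $f_X:\alpha\mapsto\beta \iff g_Y:\alpha\mapsto\beta$. - There is an inactive function $1_\emptyset$ with $1_\emptyset:\emptyset\twoheadrightarrow\emptyset$ that maps nothing. - (UFA) For all $\alpha,\beta$ there is an ur-function $f_{\alpha^+}$ with $f_{\alpha^+}:\alpha^+\twoheadrightarrow\beta^+$ and $f_{\alpha^+}:\alpha\mapsto\beta$. - (REG-F) If $f_X:X\twoheadrightarrow Y$, then for every $\alpha$, neither $f_X:f_X\mapsto\alpha$ nor $f_X:\alpha\mapsto f_X$. - (SUM-F, nonstandard, with a multiple quantifier over families) For every nonempty set $X$ and every family $(f_{\alpha^+})_{\alpha\in X}$ that assigns to each $\alpha\in X$ an ur-function $f_{\alpha^+}$ on $\alpha^+$, there exist a function $F_X$ and a set $Y$ with $F_X:X\twoheadrightarrow Y$ and $F_X:\alpha\mapsto f_{\alpha^+}(\alpha)$ for every $\alpha\in X$. *)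

theory Defs
  imports Main
begin

text \<open>Things form the type 'a.
  isSet X : X is a set;  funOn f X : f is a function on the set X;
  mem a b : a \<in> b;  dcod f Y Z : f has domain Y and codomain Z;
  mapsto f a b : f maps a to b.\<close>

definition singleton_of :: "('a \<Rightarrow> bool) \<Rightarrow> ('a \<Rightarrow> 'a \<Rightarrow> bool) \<Rightarrow> 'a \<Rightarrow> 'a \<Rightarrow> bool" where
  "singleton_of isSet mem S a \<longleftrightarrow> isSet S \<and> (\<forall>c. mem c S \<longleftrightarrow> c = a)"

definition nonempty :: "('a \<Rightarrow> 'a \<Rightarrow> bool) \<Rightarrow> 'a \<Rightarrow> bool" where
  "nonempty mem X \<longleftrightarrow> (\<exists>a. mem a X)"

definition app :: "('a \<Rightarrow> 'a \<Rightarrow> 'a \<Rightarrow> bool) \<Rightarrow> 'a \<Rightarrow> 'a \<Rightarrow> 'a" where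
  "app mapsto f a = (THE b. mapsto f a b)"

definition T_model ::
  "('a \<Rightarrow> bool) \<Rightarrow> ('a \<Rightarrow> 'a \<Rightarrow> bool) \<Rightarrow> ('a \<Rightarrow> 'a \<Rightarrow> bool)
   \<Rightarrow> ('a \<Rightarrow> 'a \<Rightarrow> 'a \<Rightarrow> bool) \<Rightarrow> ('a \<Rightarrow> 'a \<Rightarrow> 'a \<Rightarrow> bool) \<Rightarrow> bool" where
  "T_model isSet funOn mem dcod mapsto \<longleftrightarrow>
    \<comment> \<open>sorts: every thing is a set or a function on a set\<close>
    (\<forall>a. isSet a \<or> (\<exists>X. isSet X \<and> funOn a X)) \<and>
    (\<forall>f X. funOn f X \<longrightarrow> isSet X) \<and>
    \<comment> \<open>typing of the domain/codomain predicate f : Y ->> Z (Y, Z sets)\<close>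
    (\<forall>f Y Z. dcod f Y Z \<longrightarrow> isSet Y \<and> isSet Z) \<and>
    \<comment> \<open>extensionality for sets\<close>
    (\<forall>X Y. isSet X \<and> isSet Y \<and> (\<forall>a. mem a X \<longleftrightarrow> mem a Y) \<longrightarrow> X = Y) \<and>
    \<comment> \<open>no function on a set is a set\<close>
    (\<forall>f X. funOn f X \<longrightarrow> \<not> isSet f) \<and>
    \<comment> \<open>a set has no domain or codomain and maps nothing\<close>
    (\<forall>X. isSet X \<longrightarrow> (\<forall>Y Z. \<not> dcod X Y Z) \<and> (\<forall>a b. \<not> mapsto X a b)) \<and>
    \<comment> \<open>empty set\<close>
    (\<exists>E. isSet E \<and> (\<forall>a. \<not> mem a E)) \<and>
    \<comment> \<open>pairing\<close>
    (\<forall>a b. \<exists>P. isSet P \<and> (\<forall>c. mem c P \<longleftrightarrow> c = a \<or> c = b)) \<and>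
    \<comment> \<open>union\<close>
    (\<forall>X. isSet X \<longrightarrow> (\<exists>U. isSet U \<and> (\<forall>c. mem c U \<longleftrightarrow> (\<exists>Z. mem c Z \<and> mem Z X)))) \<and>
    \<comment> \<open>power set\<close>
    (\<forall>X. isSet X \<longrightarrow> (\<exists>P. isSet P \<and>
        (\<forall>c. mem c P \<longleftrightarrow> isSet c \<and> (\<forall>d. mem d c \<longrightarrow> mem d X)))) \<and>
    \<comment> \<open>infinity: omega is the set of finite Zermelo ordinals 0 = {}, n+1 = {n}\<close>
    (\<exists>W num. isSet W \<and> isSet (num 0) \<and> (\<forall>a. \<not> mem a (num 0)) \<and>
        (\<forall>n. singleton_of isSet mem (num (Suc n)) (num n)) \<and>
        (\<forall>c. mem c W \<longleftrightarrow> (\<exists>n::nat. c = num n))) \<and>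
    \<comment> \<open>regularity\<close>
    (\<forall>X. isSet X \<and> nonempty mem X \<longrightarrow> (\<exists>a. mem a X \<and> \<not> (\<exists>b. mem b a \<and> mem b X))) \<and>
    \<comment> \<open>a function on a set has no elements\<close>
    (\<forall>f X. funOn f X \<longrightarrow> (\<forall>b. \<not> mem b f)) \<and>
    \<comment> \<open>GEN-F\<close>
    (\<forall>f X. isSet X \<and> nonempty mem X \<and> funOn f X \<longrightarrow>
        (\<exists>Y Z. isSet Y \<and> isSet Z \<and> dcod f Y Z \<and> (\<forall>a. mem a Y \<longrightarrow> (\<exists>!b. mapsto f a b)))) \<and>
    \<comment> \<open>f_X has no domain other than X\<close>
    (\<forall>f X Y Z. funOn f X \<and> dcod f Y Z \<longrightarrow> Y = X) \<and>
    \<comment> \<open>f_X maps only elements of X\<close>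
    (\<forall>f X a b. funOn f X \<and> mapsto f a b \<longrightarrow> mem a X) \<and>
    \<comment> \<open>codomain of f_X on X is the image set\<close>
    (\<forall>f X b. isSet X \<and> nonempty mem X \<and> funOn f X \<and> dcod f X b \<longrightarrow>
        isSet b \<and> (\<forall>c. mem c b \<longleftrightarrow> (\<exists>e. mem e X \<and> mapsto f e c))) \<and>
    \<comment> \<open>INV\<close>
    (\<forall>f X Y. isSet X \<and> nonempty mem X \<and> funOn f X \<and> dcod f X Y \<longrightarrow>
        (\<forall>b. \<exists>S. isSet S \<and> (\<forall>a. mem a S \<longleftrightarrow> mem a X \<and> mapsto f a b))) \<and>
    \<comment> \<open>EXT-F\<close>
    (\<forall>f X g Y. funOn f X \<and> funOn g Y \<longrightarrow>
        (f = g \<longleftrightarrow> X = Y \<and> (\<forall>a b. mapsto f a b \<longleftrightarrow> mapsto g a b))) \<and>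
    \<comment> \<open>inactive function 1_empty\<close>
    (\<exists>u E. isSet E \<and> (\<forall>a. \<not> mem a E) \<and> funOn u E \<and> dcod u E E \<and> (\<forall>a b. \<not> mapsto u a b)) \<and>
    \<comment> \<open>UFA\<close>
    (\<forall>a b. \<exists>f S T. singleton_of isSet mem S a \<and> singleton_of isSet mem T b \<and>
        funOn f S \<and> dcod f S T \<and> mapsto f a b) \<and>
    \<comment> \<open>REG-F\<close>
    (\<forall>f X Y. funOn f X \<and> dcod f X Y \<longrightarrow> (\<forall>a. \<not> mapsto f f a \<and> \<not> mapsto f a f)) \<and>
    \<comment> \<open>SUM-F, with the family quantifier read as a quantifier over all HOL families\<close>
    (\<forall>X. isSet X \<and> nonempty mem X \<longrightarrow>
      (\<forall>fam :: 'a \<Rightarrow> 'a.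
        (\<forall>a. mem a X \<longrightarrow> (\<exists>S. singleton_of isSet mem S a \<and> funOn (fam a) S)) \<longrightarrow>
        (\<exists>F Y. funOn F X \<and> isSet Y \<and> dcod F X Y \<and>
           (\<forall>a. mem a X \<longrightarrow> mapsto F a (app mapsto (fam a) a)))))"

end

theory Submission
  imports Defs
begin

theorem mainTheorem3:
  fixes isSet :: "'a \<Rightarrow> bool" and funOn mem :: "'a \<Rightarrow> 'a \<Rightarrow> bool"
    and dcod mapsto :: "'a \<Rightarrow> 'a \<Rightarrow> 'a \<Rightarrow> bool"
    and \<Phi> :: "'a \<Rightarrow> bool"
  assumes "T_model isSet funOn mem dcod mapsto"
  shows "\<forall>X. isSet X \<longrightarrow> (\<exists>Y. isSet Y \<and> (\<forall>a. mem a Y \<longleftrightarrow> mem a X \<and> \<Phi> a))"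
proof (intro allI impI)
  fix X assume X: "isSet X"
  note M = assms[unfolded T_model_def]
  have M1: "\<forall>f X. isSet X \<and> nonempty mem X \<and> funOn f X \<longrightarrow> (\<exists>Y Z. isSet Y \<and> isSet Z \<and> dcod f Y Z \<and> (\<forall>a. mem a Y \<longrightarrow> (\<exists>!b. mapsto f a b)))" using M[THEN conjunct2, THEN conjunct2, THEN conjunct2, THEN conjunct2, THEN conjunct2, THEN conjunct2, THEN conjunct2, THEN conjunct2, THEN conjunct2, THEN conjunct2, THEN conjunct2, THEN conjunct2, THEN conjunct2, THEN conjunct1] .

  have M2: "\<forall>f X Y Z. funOn f X \<and> dcod f Y Z \<longrightarrow> Y = X" using M[THEN conjunct2, THEN conjunct2, THEN conjunct2, THEN conjunct2, THEN conjunct2, THEN conjunct2, THEN conjunct2, THEN conjunct2, THEN conjunct2, THEN conjunct2, THEN conjunct2, THEN conjunct2, THEN conjunct2, THEN conjunct2, THEN conjunct1] .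
  have M3: "\<exists>E. isSet E \<and> (\<forall>a. \<not> mem a E)" using M[THEN conjunct2, THEN conjunct2, THEN conjunct2, THEN conjunct2, THEN conjunct2, THEN conjunct2, THEN conjunct1] .
  have M4: "\<forall>a b. \<exists>P. isSet P \<and> (\<forall>c. mem c P \<longleftrightarrow> c = a \<or> c = b)" using M[THEN conjunct2, THEN conjunct2, THEN conjunct2, THEN conjunct2, THEN conjunct2, THEN conjunct2, THEN conjunct2, THEN conjunct1] .
  have M5: "\<forall>a b. \<exists>f S T. singleton_of isSet mem S a \<and> singleton_of isSet mem T b \<and>
        funOn f S \<and> dcod f S T \<and> mapsto f a b" using M[THEN conjunct2, THEN conjunct2, THEN conjunct2, THEN conjunct2, THEN conjunct2, THEN conjunct2, THEN conjunct2, THEN conjunct2, THEN conjunct2, THEN conjunct2, THEN conjunct2, THEN conjunct2, THEN conjunct2, THEN conjunct2, THEN conjunct2, THEN conjunct2, THEN conjunct2, THEN conjunct2, THEN conjunct2, THEN conjunct2, THEN conjunct1] .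
  have M6: "\<forall>f X Y. isSet X \<and> nonempty mem X \<and> funOn f X \<and> dcod f X Y \<longrightarrow>
        (\<forall>b. \<exists>S. isSet S \<and> (\<forall>a. mem a S \<longleftrightarrow> mem a X \<and> mapsto f a b))" using M[THEN conjunct2, THEN conjunct2, THEN conjunct2, THEN conjunct2, THEN conjunct2, THEN conjunct2, THEN conjunct2, THEN conjunct2, THEN conjunct2, THEN conjunct2, THEN conjunct2, THEN conjunct2, THEN conjunct2, THEN conjunct2, THEN conjunct2, THEN conjunct2, THEN conjunct2, THEN conjunct1] .
  have M7: "\<forall>X. isSet X \<and> nonempty mem X \<longrightarrow>
      (\<forall>fam :: 'a \<Rightarrow> 'a.
        (\<forall>a. mem a X \<longrightarrow> (\<exists>S. singleton_of isSet mem S a \<and> funOn (fam a) S)) \<longrightarrow>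
        (\<exists>F Y. funOn F X \<and> isSet Y \<and> dcod F X Y \<and>
           (\<forall>a. mem a X \<longrightarrow> mapsto F a (app mapsto (fam a) a))))" using M[THEN conjunct2, THEN conjunct2, THEN conjunct2, THEN conjunct2, THEN conjunct2, THEN conjunct2, THEN conjunct2, THEN conjunct2, THEN conjunct2, THEN conjunct2, THEN conjunct2, THEN conjunct2, THEN conjunct2, THEN conjunct2, THEN conjunct2, THEN conjunct2, THEN conjunct2, THEN conjunct2, THEN conjunct2, THEN conjunct2, THEN conjunct2, THEN conjunct2] .
  have genf: "\<And>f X. isSet X \<Longrightarrow> nonempty mem X \<Longrightarrow> funOn f X \<Longrightarrow>
        (\<exists>Y Z. isSet Y \<and> isSet Z \<and> dcod f Y Z \<and> (\<forall>a. mem a Y \<longrightarrow> (\<exists>!b. mapsto f a b)))"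
    using M1 by blast
  have dom: "\<And>f X Y Z. funOn f X \<Longrightarrow> dcod f Y Z \<Longrightarrow> Y = X" using M2 by blast
  have uniq: "\<And>f X a b c. isSet X \<Longrightarrow> funOn f X \<Longrightarrow> mem a X \<Longrightarrow> mapsto f a b \<Longrightarrow> mapsto f a c \<Longrightarrow> b = c"
  proof -
    fix f X a b c assume h: "isSet X" "funOn f X" "mem a X" "mapsto f a b" "mapsto f a c"
    then have "nonempty mem X" unfolding nonempty_def by blast
    then obtain Y Z where "dcod f Y Z" "\<forall>a. mem a Y \<longrightarrow> (\<exists>!b. mapsto f a b)"
      using genf h by blast
    moreover have "Y = X" using dom h(2) calculation(1) by blast
    ultimately show "b = c" using h by blast
  qed
  show "\<exists>Y. isSet Y \<and> (\<forall>a. mem a Y \<longleftrightarrow> mem a X \<and> \<Phi> a)"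
  proof (cases "nonempty mem X")
    case False
    then show ?thesis using X unfolding nonempty_def by blast
  next
    case ne: True
    obtain E where E: "isSet E" "\<forall>a. \<not> mem a E" using M3 by blast
    obtain P where P: "isSet P" "\<forall>c. mem c P \<longleftrightarrow> c = E \<or> c = E" using M4 by blast
    have PE: "P \<noteq> E" using P E by blast
    define v where "v a = (if \<Phi> a then E else P)" for a
    have ufa: "\<forall>a b. \<exists>f S T. singleton_of isSet mem S a \<and> singleton_of isSet mem T b \<and>
        funOn f S \<and> dcod f S T \<and> mapsto f a b" using M5 by blast
    define fam where "fam a = (SOME f. \<exists>S T. singleton_of isSet mem S a \<and> singleton_of isSet mem T (v a) \<and>
        funOn f S \<and> dcod f S T \<and> mapsto f a (v a))" for a
    have famP: "\<exists>S T. singleton_of isSet mem S a \<and> singleton_of isSet mem T (v a) \<and>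
        funOn (fam a) S \<and> dcod (fam a) S T \<and> mapsto (fam a) a (v a)" for a
      unfolding fam_def by (rule someI_ex) (use ufa in blast)
    have appv: "app mapsto (fam a) a = v a" for a
    proof -
      obtain S where S: "singleton_of isSet mem S a" "funOn (fam a) S" "mapsto (fam a) a (v a)"
        using famP by blast
      have "isSet S" "mem a S" using S(1) unfolding singleton_of_def by auto
      have U: "\<And>b. mapsto (fam a) a b \<Longrightarrow> b = v a" by (rule sym, rule uniq[OF \<open>isSet S\<close> S(2) \<open>mem a S\<close> S(3)])
      show ?thesis unfolding app_def by (rule the_equality[where P="mapsto (fam a) a", OF S(3) U])
    qed
    have sumf: "\<forall>fam :: 'a \<Rightarrow> 'a.
        (\<forall>a. mem a X \<longrightarrow> (\<exists>S. singleton_of isSet mem S a \<and> funOn (fam a) S)) \<longrightarrow>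
        (\<exists>F Y. funOn F X \<and> isSet Y \<and> dcod F X Y \<and>
           (\<forall>a. mem a X \<longrightarrow> mapsto F a (app mapsto (fam a) a)))"
      using M7[THEN spec[of _ X], THEN mp, OF conjI[OF X ne]] .
    have fa: "\<forall>a. mem a X \<longrightarrow> (\<exists>S. singleton_of isSet mem S a \<and> funOn (fam a) S)"
      using famP by blast
    obtain F Y where F: "funOn F X" "isSet Y" "dcod F X Y"
       "\<forall>a. mem a X \<longrightarrow> mapsto F a (app mapsto (fam a) a)"
      using sumf[THEN spec[of _ fam], THEN mp, OF fa] by blast
    from F(4) have F4: "\<forall>a. mem a X \<longrightarrow> mapsto F a (v a)" by (simp add: appv)
    have "\<forall>b. \<exists>S. isSet S \<and> (\<forall>a. mem a S \<longleftrightarrow> mem a X \<and> mapsto F a b)"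
      using M6 X ne F by blast
    then obtain S where S: "isSet S" "\<forall>a. mem a S \<longleftrightarrow> mem a X \<and> mapsto F a E" by blast
    have "mem a X \<and> mapsto F a E \<longleftrightarrow> mem a X \<and> \<Phi> a" for a
    proof (cases "mem a X")
      case True
      then have "mapsto F a (v a)" using F4 by blast
      moreover have "mapsto F a E \<Longrightarrow> E = v a" using uniq[OF X F(1) True] calculation by blast
      ultimately show ?thesis using True PE unfolding v_def by (auto split: if_splits)
    qed simp
    then show ?thesis using S by blast
  qed
qed

end
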